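(* Let $\alpha>0$ and let $X_{1,1},X_{1,2}$ be i.i.d. real random variables such that $$x^{1+2\alpha}\,\mathbb P\big(|X_{1,1}X_{1,2}|\ge\sqrt{x\log x}\big)\to0\quad\text{as }x\to\infty.$$ Then $$\mathbb E\Big(\frac{|X_{1,1}|^{2+4\alpha}}{(1+\log|X_{1,1}|)^{4+4\alpha}}\Big)<\infty.$$
   Context: Here $\log x$ denotes $\ln\max(x,e)$ (so $\log|X_{1,1}|\ge1$). *)

theory Defs
  imports "HOL-Probability.Probability"
begin

text \<open>The paper's convention: log x denotes ln (max x e), so that log x \<ge> 1.\<close>
definition logp :: "real \<Rightarrow> real" where
  "logp x = ln (max x (exp 1))"

end

theory Submission imports Defs "HOL-Real_Asymp.Real_Asymp" begin

lemma logp_ge1: "logp x \<ge> 1"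
  unfolding logp_def by (metis exp_gt_zero ln_exp ln_le_cancel_iff max.cobounded2 max.strict_coboundedI2)

lemma logp_mono: "x \<le> y \<Longrightarrow> logp x \<le> logp y"
  unfolding logp_def by (smt (verit) exp_gt_zero ln_le_cancel_iff)

lemma logp_eq: "x \<ge> exp 1 \<Longrightarrow> logp x = ln x"
  unfolding logp_def by (simp add: max_def)

lemma ennreal_le_suminf_term:
  fixes f :: "nat \<Rightarrow> ennreal"
  shows "f k \<le> suminf f"
proof -
  have "sum f {k} \<le> suminf f"
    by (rule sum_le_suminf) (auto intro: summableI)
  then show ?thesis by simp
qed

lemma pointwise:
  fixes y \<beta> :: real
  assumes y: "y \<ge> 0" and b: "\<beta> > 0"
  shows "ennreal (y powr \<beta> / (1 + logp y) powr (\<beta> + 2)) \<le>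
     ennreal (exp \<beta>) + (\<Sum>k. ennreal (exp (\<beta> * (real k + 1)) / (1 + real k) powr (\<beta> + 2)) * indicator {t. exp (real k) \<le> t} y)"
proof (cases "y < exp 1")
  case True
  have "y powr \<beta> \<le> exp 1 powr \<beta>"
    using y b True by (intro powr_mono2) auto
  also have "\<dots> = exp \<beta>" by (simp add: powr_def)
  finally have n: "y powr \<beta> \<le> exp \<beta>" .
  have d: "1 \<le> (1 + logp y) powr (\<beta> + 2)"
    using logp_ge1[of y] b by (intro ge_one_powr_ge_zero) auto
  have "y powr \<beta> / (1 + logp y) powr (\<beta> + 2) \<le> y powr \<beta>"
    using d by (simp add: divide_le_eq) (smt (verit) mult_le_cancel_left1 powr_ge_zero)
  with n have "ennreal (y powr \<beta> / (1 + logp y) powr (\<beta> + 2)) \<le> ennreal (exp \<beta>)"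
    by (intro ennreal_leI) auto
  then show ?thesis by (rule order_trans) (simp add: add_increasing2)
next
  case False
  define k where "k = nat \<lfloor>ln y\<rfloor>"
  have ypos: "y > 0" using False by (smt (verit) exp_gt_zero)
  have lny: "ln y \<ge> 1" using False ypos by (metis ln_exp ln_le_cancel_iff exp_gt_zero not_less)
  have fl: "real k = of_int \<lfloor>ln y\<rfloor>" unfolding k_def using lny by simp
  have k1: "real k \<le> ln y" "ln y < real k + 1"
    unfolding fl by linarith+
  have eky: "exp (real k) \<le> y" using k1 ypos by (metis exp_le_cancel_iff exp_ln)
  have yek: "y \<le> exp (real k + 1)" using k1 ypos by (metis exp_le_cancel_iff exp_ln less_imp_le)
  have "y powr \<beta> \<le> exp (real k + 1) powr \<beta>"
    using y b yek by (intro powr_mono2) auto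
  also have "\<dots> = exp (\<beta> * (real k + 1))" by (simp add: powr_def mult.commute)
  finally have n: "y powr \<beta> \<le> exp (\<beta> * (real k + 1))" .
  have lg: "logp y = ln y" using False by (intro logp_eq) auto
  have d: "(1 + real k) powr (\<beta> + 2) \<le> (1 + logp y) powr (\<beta> + 2)"
    using lg k1 b by (intro powr_mono2) auto
  have dp: "0 < (1 + real k) powr (\<beta> + 2)" using k1 by simp
  have "y powr \<beta> / (1 + logp y) powr (\<beta> + 2) \<le> exp (\<beta> * (real k + 1)) / (1 + real k) powr (\<beta> + 2)"
    by (rule frac_le) (use n d dp in auto)
  then have "ennreal (y powr \<beta> / (1 + logp y) powr (\<beta> + 2)) \<le>
     ennreal (exp (\<beta> * (real k + 1)) / (1 + real k) powr (\<beta> + 2)) * indicator {t. exp (real k) \<le> t} y"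
    using eky by (simp add: ennreal_leI)
  also have "\<dots> \<le> (\<Sum>k. ennreal (exp (\<beta> * (real k + 1)) / (1 + real k) powr (\<beta> + 2)) * indicator {t. exp (real k) \<le> t} y)"
    by (rule ennreal_le_suminf_term[where f = "\<lambda>k. ennreal (exp (\<beta> * (real k + 1)) / (1 + real k) powr (\<beta> + 2)) * indicator {t. exp (real k) \<le> t} y"])
  finally show ?thesis by (rule order_trans) (simp add: add_increasing)
qed

lemma core:
  fixes c q \<gamma> P x :: real and k :: nat
  assumes k: "k \<ge> 1" and q: "q > 0" and c: "c > 0" and g: "\<gamma> > 0" and P: "0 \<le> P"
    and Pb: "P * q * x powr \<gamma> \<le> 1" and x: "x = c^2 * exp (2 * real k) / (2 * real k)"
  shows "exp (2*\<gamma> * (real k + 1)) / (1 + real k) powr (2*\<gamma> + 2) * P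
         \<le> exp (2*\<gamma>) * 2 powr \<gamma> / (q * c powr (2*\<gamma>)) * real k powr -2"
proof -
  define A where "A = exp (2*\<gamma> * (real k + 1))"
  define B where "B = (1 + real k) powr (2*\<gamma> + 2)"
  define X where "X = x powr \<gamma>"
  define C where "C = c powr (2*\<gamma>)"
  define E where "E = exp (2*\<gamma>*real k)"
  define T where "T = (2 * real k) powr \<gamma>"
  define K where "K = real k powr \<gamma>"
  define K2 where "K2 = real k powr (2*\<gamma>+2)"
  have kpos: "real k > 0" using k by simp
  have pos: "A > 0" "B > 0" "C > 0" "E > 0" "T > 0" "K > 0" "K2 > 0"
    unfolding A_def B_def C_def E_def T_def K_def K2_def using c kpos by auto
  have xpos: "x > 0" using x c kpos by simp
  have c2: "(c^2) powr \<gamma> = C"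
    unfolding C_def using c by (simp add: powr_def ln_realpow mult_ac)
  have e2: "exp (2 * real k) powr \<gamma> = E" unfolding E_def by (simp add: powr_def mult_ac)
  have XX: "X = C * E / T"
  proof -
    have "X = (c^2 * exp (2 * real k)) powr \<gamma> / (2 * real k) powr \<gamma>"
      unfolding X_def x using c kpos by (simp add: powr_divide)
    also have "\<dots> = (c^2) powr \<gamma> * exp (2 * real k) powr \<gamma> / (2 * real k) powr \<gamma>"
      using c by (subst powr_mult) auto
    finally show ?thesis unfolding T_def c2 e2 .
  qed
  have AA: "A = exp (2*\<gamma>) * E" unfolding A_def E_def by (simp add: exp_add[symmetric] algebra_simps)
  have TT: "T = 2 powr \<gamma> * K" unfolding T_def K_def using kpos by (simp add: powr_mult)
  have KB: "K2 \<le> B" unfolding K2_def B_def using g kpos by (intro powr_mono2) auto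
  have KK: "K / K2 \<le> real k powr -2"
  proof -
    have "K / K2 = real k powr (\<gamma> - (2*\<gamma>+2))" unfolding K_def K2_def by (rule powr_diff[symmetric])
    also have "\<dots> \<le> real k powr -2" using k g by (intro powr_mono) auto
    finally show ?thesis .
  qed
  have Xpos: "X > 0" using XX pos by simp
  have P1: "P \<le> T / (q * C * E)"
  proof -
    have "P \<le> 1 / (q * X)" using Pb q Xpos unfolding X_def by (simp add: le_divide_eq algebra_simps)
    moreover have "1 / (q * X) = T / (q * C * E)" using pos q unfolding XX by (simp add: field_simps)
    ultimately show ?thesis by simp
  qed
  have "A / B * P \<le> A / B * (T / (q * C * E))"
    using P1 pos by (intro mult_left_mono) auto
  also have "\<dots> = exp (2*\<gamma>) * 2 powr \<gamma> / (q * C) * (K / B)"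
    using pos q by (simp add: AA TT field_simps)
  also have "\<dots> \<le> exp (2*\<gamma>) * 2 powr \<gamma> / (q * C) * (K / K2)"
    using pos q KB by (intro mult_left_mono divide_left_mono) auto
  also have "\<dots> \<le> exp (2*\<gamma>) * 2 powr \<gamma> / (q * C) * real k powr -2"
    using pos q KK by (intro mult_left_mono) auto
  finally show ?thesis unfolding A_def B_def C_def by simp
qed

theorem lemma6p4:
  fixes M :: "'a measure" and X1 X2 :: "'a \<Rightarrow> real" and \<alpha> :: real
  assumes "prob_space M"
    and "\<alpha> > 0"
    and "X1 \<in> borel_measurable M" and "X2 \<in> borel_measurable M"
    and "prob_space.indep_var M borel X1 borel X2"
    and "distr M borel X1 = distr M borel X2"
    and "((\<lambda>x. x powr (1 + 2 * \<alpha>) *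
            measure M {\<omega> \<in> space M. \<bar>X1 \<omega> * X2 \<omega>\<bar> \<ge> sqrt (x * logp x)}) \<longlongrightarrow> 0) at_top"
  shows "(\<integral>\<^sup>+ \<omega>. ennreal (\<bar>X1 \<omega>\<bar> powr (2 + 4 * \<alpha>) / (1 + logp \<bar>X1 \<omega>\<bar>) powr (4 + 4 * \<alpha>)) \<partial>M) < \<infinity>"
proof -
  interpret P: prob_space M by fact
  note X1m = assms(3) and X2m = assms(4)
  define \<gamma> where "\<gamma> = 1 + 2*\<alpha>"
  have g: "\<gamma> > 0" using assms(2) unfolding \<gamma>_def by simp
  have e1: "2 + 4*\<alpha> = 2*\<gamma>" "4 + 4*\<alpha> = 2*\<gamma> + 2" unfolding \<gamma>_def by simp_all
  define a where "a k = exp (2*\<gamma> * (real k + 1)) / (1 + real k) powr (2*\<gamma> + 2)" for k :: nat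
  have a_nn: "a k \<ge> 0" for k unfolding a_def by simp
  define S where "S k = {\<omega> \<in> space M. exp (real k) \<le> \<bar>X1 \<omega>\<bar>}" for k :: nat
  have Ssets: "S k \<in> sets M" for k unfolding S_def using X1m by measurable
  have transfer: "P.prob {\<omega> \<in> space M. r \<le> \<bar>X1 \<omega>\<bar>} = P.prob {\<omega> \<in> space M. r \<le> \<bar>X2 \<omega>\<bar>}" for r :: real
  proof -
    have B: "{t::real. r \<le> \<bar>t\<bar>} \<in> sets borel" by measurable
    have "P.prob {\<omega> \<in> space M. r \<le> \<bar>X1 \<omega>\<bar>} = measure (distr M borel X1) {t. r \<le> \<bar>t\<bar>}"
      using X1m B by (subst measure_distr) (auto intro!: arg_cong[where f="measure M"])
    also have "\<dots> = measure (distr M borel X2) {t. r \<le> \<bar>t\<bar>}" using assms(6) by simp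
    also have "\<dots> = P.prob {\<omega> \<in> space M. r \<le> \<bar>X2 \<omega>\<bar>}"
      using X2m B by (subst measure_distr) (auto intro!: arg_cong[where f="measure M"])
    finally show ?thesis .
  qed
  have summ: "summable (\<lambda>k. a k * P.prob (S k))"
  proof (cases "\<exists>c. 0 < c \<and> c \<le> 1 \<and> 0 < P.prob {\<omega> \<in> space M. c \<le> \<bar>X2 \<omega>\<bar>}")
    case False
    have "P.prob {\<omega> \<in> space M. 1 \<le> \<bar>X2 \<omega>\<bar>} = 0"
      using False by (metis less_eq_real_def measure_nonneg zero_less_one)
    then have z1: "P.prob {\<omega> \<in> space M. 1 \<le> \<bar>X1 \<omega>\<bar>} = 0" using transfer by simp
    have "P.prob (S k) = 0" for k
    proof -
      have "P.prob (S k) \<le> P.prob {\<omega> \<in> space M. 1 \<le> \<bar>X1 \<omega>\<bar>}"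
        unfolding S_def using X1m
      proof (intro P.finite_measure_mono)
        have e1k: "1 \<le> exp (real k)" by simp
        then show "{\<omega> \<in> space M. exp (real k) \<le> \<bar>X1 \<omega>\<bar>} \<subseteq> {\<omega> \<in> space M. 1 \<le> \<bar>X1 \<omega>\<bar>}"
          by (auto intro: order.trans[OF e1k])
      qed measurable
      then show ?thesis using z1 by (simp add: antisym)
    qed
    then show ?thesis by simp
  next
    case True
    then obtain c where c: "0 < c" "c \<le> 1" and qpos: "0 < P.prob {\<omega> \<in> space M. c \<le> \<bar>X2 \<omega>\<bar>}" by blast
    define q where "q = P.prob {\<omega> \<in> space M. c \<le> \<bar>X2 \<omega>\<bar>}"
    have q: "q > 0" using qpos unfolding q_def .
    define p where "p x = P.prob {\<omega> \<in> space M. \<bar>X1 \<omega> * X2 \<omega>\<bar> \<ge> sqrt (x * logp x)}" for x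
    have hyp: "((\<lambda>x. x powr \<gamma> * p x) \<longlongrightarrow> 0) at_top"
      using assms(7) unfolding \<gamma>_def p_def .
    have "eventually (\<lambda>x. x powr \<gamma> * p x < 1) at_top"
      using order_tendstoD(2)[OF hyp, of 1] by simp
    then obtain X0 where X0: "\<And>x. x \<ge> X0 \<Longrightarrow> x powr \<gamma> * p x < 1"
      by (auto simp: eventually_at_top_linorder)
    define xk where "xk k = c^2 * exp (2 * real k) / (2 * real k)" for k :: nat
    have lim1: "filterlim (\<lambda>k::nat. exp (2 * real k) / (2 * real k)) at_top sequentially"
      by real_asymp
    have "filterlim xk at_top sequentially"
      unfolding xk_def times_divide_eq_right[symmetric]
      by (rule filterlim_tendsto_pos_mult_at_top[OF tendsto_const _ lim1]) (use c in simp)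
    then have ev1: "eventually (\<lambda>k. X0 \<le> xk k) sequentially"
      by (simp add: filterlim_at_top)
    define D where "D = exp (2*\<gamma>) * 2 powr \<gamma> / (q * c powr (2*\<gamma>))"
    have "eventually (\<lambda>k. norm (a k * P.prob (S k)) \<le> D * real k powr -2) sequentially"
      using ev1 eventually_ge_at_top[of 1]
    proof eventually_elim
      case (elim k)
      then have k: "k \<ge> 1" and kX: "X0 \<le> xk k" by auto
      have kpos: "real k > 0" using k by simp
      have xpos: "xk k > 0" unfolding xk_def using c kpos by simp
      have xle: "xk k \<le> exp (2 * real k)"
      proof -
        have "xk k = c^2 * (exp (2 * real k) / (2 * real k))" unfolding xk_def by simp
        also have "\<dots> \<le> 1 * (exp (2 * real k) / 1)"
          using c k by (intro mult_mono divide_left_mono) (auto simp: power_le_one)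
        finally show ?thesis by simp
      qed
      have lg: "logp (xk k) \<le> 2 * real k"
      proof -
        have "logp (xk k) \<le> logp (exp (2 * real k))" using xle by (rule logp_mono)
        also have "\<dots> = 2 * real k" using k by (subst logp_eq) auto
        finally show ?thesis .
      qed
      have xl: "xk k * logp (xk k) \<le> (c * exp (real k))^2"
      proof -
        have "xk k * logp (xk k) \<le> xk k * (2 * real k)"
          using lg xpos by (intro mult_left_mono) auto
        also have "\<dots> = (c * exp (real k))^2"
          unfolding xk_def using kpos by (simp add: power_mult_distrib power2_eq_square mult_ac flip: exp_add)
        finally show ?thesis .
      qed
      have sq: "sqrt (xk k * logp (xk k)) \<le> c * exp (real k)"
        using xl c by (metis real_sqrt_le_mono real_sqrt_abs abs_of_pos exp_gt_zero mult_pos_pos)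
      have ind: "P.prob {\<omega> \<in> space M. X1 \<omega> \<in> {t. exp (real k) \<le> \<bar>t\<bar>} \<and> X2 \<omega> \<in> {t. c \<le> \<bar>t\<bar>}}
          = P.prob {\<omega> \<in> space M. X1 \<omega> \<in> {t. exp (real k) \<le> \<bar>t\<bar>}} * P.prob {\<omega> \<in> space M. X2 \<omega> \<in> {t. c \<le> \<bar>t\<bar>}}"
        by (rule P.prob_indep_random_variable[OF assms(5)]) measurable
      have "P.prob (S k) * q = P.prob {\<omega> \<in> space M. exp (real k) \<le> \<bar>X1 \<omega>\<bar> \<and> c \<le> \<bar>X2 \<omega>\<bar>}"
        using ind unfolding S_def q_def by simp
      also have "\<dots> \<le> p (xk k)"
        unfolding p_def
      proof (intro P.finite_measure_mono)
        show "{\<omega> \<in> space M. exp (real k) \<le> \<bar>X1 \<omega>\<bar> \<and> c \<le> \<bar>X2 \<omega>\<bar>}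
            \<subseteq> {\<omega> \<in> space M. sqrt (xk k * logp (xk k)) \<le> \<bar>X1 \<omega> * X2 \<omega>\<bar>}"
        proof safe
          fix \<omega> assume "\<omega> \<in> space M" "exp (real k) \<le> \<bar>X1 \<omega>\<bar>" "c \<le> \<bar>X2 \<omega>\<bar>"
          then have "exp (real k) * c \<le> \<bar>X1 \<omega>\<bar> * \<bar>X2 \<omega>\<bar>"
            using c by (intro mult_mono) auto
          then show "sqrt (xk k * logp (xk k)) \<le> \<bar>X1 \<omega> * X2 \<omega>\<bar>"
            using sq by (simp add: abs_mult mult.commute)
        qed
        show "{\<omega> \<in> space M. sqrt (xk k * logp (xk k)) \<le> \<bar>X1 \<omega> * X2 \<omega>\<bar>} \<in> sets M"
          using X1m X2m by measurable
      qed
      finally have Pq: "P.prob (S k) * q \<le> p (xk k)" .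
      have "P.prob (S k) * q * xk k powr \<gamma> \<le> xk k powr \<gamma> * p (xk k)"
        using mult_right_mono[OF Pq, of "xk k powr \<gamma>"] by (simp add: mult.commute)
      also have "\<dots> < 1" using X0 kX by simp
      finally have Pb: "P.prob (S k) * q * xk k powr \<gamma> \<le> 1" by simp
      have "a k * P.prob (S k) \<le> D * real k powr -2"
        unfolding a_def D_def
        by (rule core[OF k q c(1) g measure_nonneg Pb]) (simp add: xk_def)
      then show ?case using a_nn by (simp add: abs_of_nonneg)
    qed
    moreover have "summable (\<lambda>k. D * real k powr -2)"
      by (intro summable_mult) (simp add: summable_real_powr_iff)
    ultimately show ?thesis by (rule summable_comparison_test_ev)
  qed
  have step1: "(\<integral>\<^sup>+ \<omega>. ennreal (\<bar>X1 \<omega>\<bar> powr (2 + 4 * \<alpha>) / (1 + logp \<bar>X1 \<omega>\<bar>) powr (4 + 4 * \<alpha>)) \<partial>M)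
      \<le> (\<integral>\<^sup>+ \<omega>. ennreal (exp (2*\<gamma>)) + (\<Sum>k. ennreal (a k) * indicator (S k) \<omega>) \<partial>M)"
  proof (rule nn_integral_mono)
    fix \<omega> assume w: "\<omega> \<in> space M"
    then have "indicator (S k) \<omega> = (indicator {t. exp (real k) \<le> t} \<bar>X1 \<omega>\<bar> :: ennreal)" for k
      unfolding S_def by (simp add: indicator_def)
    then show "ennreal (\<bar>X1 \<omega>\<bar> powr (2 + 4 * \<alpha>) / (1 + logp \<bar>X1 \<omega>\<bar>) powr (4 + 4 * \<alpha>))
      \<le> ennreal (exp (2*\<gamma>)) + (\<Sum>k. ennreal (a k) * indicator (S k) \<omega>)"
      using pointwise[of "\<bar>X1 \<omega>\<bar>" "2*\<gamma>"] g unfolding e1 a_def by simp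
  qed
  also have "\<dots> = (\<integral>\<^sup>+ \<omega>. ennreal (exp (2*\<gamma>)) \<partial>M) + (\<integral>\<^sup>+ \<omega>. (\<Sum>k. ennreal (a k) * indicator (S k) \<omega>) \<partial>M)"
    using Ssets by (intro nn_integral_add) auto
  also have "\<dots> = ennreal (exp (2*\<gamma>)) + (\<Sum>k. \<integral>\<^sup>+ \<omega>. ennreal (a k) * indicator (S k) \<omega> \<partial>M)"
    using Ssets by (subst nn_integral_suminf) (auto simp: P.emeasure_space_1)
  also have "\<dots> = ennreal (exp (2*\<gamma>)) + (\<Sum>k. ennreal (a k * P.prob (S k)))"
    using Ssets a_nn by (simp add: nn_integral_cmult_indicator P.emeasure_eq_measure ennreal_mult)
  also have "\<dots> = ennreal (exp (2*\<gamma>)) + ennreal (\<Sum>k. a k * P.prob (S k))"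
    using summ a_nn by (subst suminf_ennreal2) auto
  also have "\<dots> < \<infinity>" by simp
  finally show ?thesis .
qed
end
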